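(* Let $m\ge 2$ and let $B$ be a blocker in $CK(2m)$. Then the boundary edges belonging to $B$ are all contained in some set of $m$ consecutive boundary edges $\{[s,s+1],[s+1,s+2],\dots,[s+m-1,s+m]\}$ (labels modulo $2m$).
   Context: $CK(2m)$ denotes the complete convex geometric graph whose vertices are the $2m$ vertices of a convex polygon, labelled cyclically $0,1,\dots,2m-1$ (labels modulo $2m$), and whose edges are all straight segments between pairs of vertices. Two edges with four distinct endpoints cross iff their endpoints alternate in the cyclic order. A simple perfect matching (SPM) is a set of $m$ edges that are pairwise disjoint (no common endpoint and no crossing). A blocking set is a set of edges containing at least one edge of every SPM. A blocker is a blocking set with exactly $m$ edges. Boundary edges are the edges $[i,i+1]$. *)

theory Defs
  imports Main
begin

(* Vertices of CK(2m): the naturals 0..2m-1 in cyclic order.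
   An edge is a two-element set {a,b} of vertices. *)

definition is_edge :: "nat \<Rightarrow> nat set \<Rightarrow> bool" where
  "is_edge m e \<longleftrightarrow> (\<exists>a b. a < b \<and> b < 2*m \<and> e = {a, b})"

definition all_edges :: "nat \<Rightarrow> nat set set" where
  "all_edges m = {e. is_edge m e}"

(* two edges with four distinct endpoints cross iff their endpoints alternate
   in the cyclic order; for a < b this means exactly one of c, d lies strictly
   between a and b *)
definition crosses :: "nat set \<Rightarrow> nat set \<Rightarrow> bool" where
  "crosses e f \<longleftrightarrow> (\<exists>a b c d. a < b \<and> c < d \<and> e = {a,b} \<and> f = {c,d} \<and>
      a \<noteq> c \<and> a \<noteq> d \<and> b \<noteq> c \<and> b \<noteq> d \<and>
      ((a < c \<and> c < b) \<noteq> (a < d \<and> d < b)))"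

definition disjoint_edges :: "nat set \<Rightarrow> nat set \<Rightarrow> bool" where
  "disjoint_edges e f \<longleftrightarrow> e \<inter> f = {} \<and> \<not> crosses e f"

definition is_SPM :: "nat \<Rightarrow> nat set set \<Rightarrow> bool" where
  "is_SPM m M \<longleftrightarrow> M \<subseteq> all_edges m \<and> card M = m \<and>
     (\<forall>e\<in>M. \<forall>f\<in>M. e \<noteq> f \<longrightarrow> disjoint_edges e f)"

definition is_blocking_set :: "nat \<Rightarrow> nat set set \<Rightarrow> bool" where
  "is_blocking_set m B \<longleftrightarrow> B \<subseteq> all_edges m \<and> (\<forall>M. is_SPM m M \<longrightarrow> M \<inter> B \<noteq> {})"

definition is_blocker :: "nat \<Rightarrow> nat set set \<Rightarrow> bool" where
  "is_blocker m B \<longleftrightarrow> is_blocking_set m B \<and> card B = m"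

definition bedge :: "nat \<Rightarrow> nat \<Rightarrow> nat set" where
  "bedge m i = {i mod (2*m), (i+1) mod (2*m)}"

definition boundary_edges :: "nat \<Rightarrow> nat set set" where
  "boundary_edges m = {bedge m i | i. i < 2*m}"

end

theory Submission
  imports Defs
begin


lemma mod_cancel_nat:
  fixes a p q n :: nat
  assumes "(a + p) mod n = (a + q) mod n"
  shows "p mod n = q mod n"
proof (cases "p \<le> q")
  case True
  then have "n dvd (a+q) - (a+p)" using assms mod_eq_dvd_iff_nat[of "a+p" "a+q" n] by simp
  then have "n dvd q - p" by simp
  then show ?thesis using True mod_eq_dvd_iff_nat[of p q n] by simp
next
  case False
  then have "n dvd (a+p) - (a+q)" using assms mod_eq_dvd_iff_nat[of "a+q" "a+p" n] by simp
  then have "n dvd p - q" by simp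
  then show ?thesis using False mod_eq_dvd_iff_nat[of q p n] by simp
qed

lemma mod_cases3:
  fixes p q n :: nat
  assumes "p mod n = q mod n" "p < 3*n" "q < 3*n"
  shows "p = q \<or> p = q+n \<or> p = q+2*n \<or> q = p+n \<or> q = p+2*n"
proof (cases "q \<le> p")
  case True
  then have "n dvd p - q" using assms mod_eq_dvd_iff_nat[of q p n] by simp
  then obtain k where k: "p - q = n*k" by (auto elim: dvdE)
  have "n*k < n*3" using k assms(2,3) by linarith
  then have "k < 3" by simp
  then have "k = 0 \<or> k = 1 \<or> k = 2" by auto
  then show ?thesis using k True by auto
next
  case False
  then have "n dvd q - p" using assms mod_eq_dvd_iff_nat[of p q n] by simp
  then obtain k where k: "q - p = n*k" by (auto elim: dvdE)
  have "n*k < n*3" using k assms(2,3) by linarith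
  then have "k < 3" by simp
  then have "k = 0 \<or> k = 1 \<or> k = 2" by auto
  then show ?thesis using k False by auto
qed



lemma ord2: "(a::nat) < b \<Longrightarrow> p < q \<Longrightarrow> {p,q} = {a,b} \<Longrightarrow> a = p \<and> b = q"
proof -
  assume "a < b" "p < q" "{p,q} = {a,b}"
  then have "(p = a \<and> q = b) \<or> (p = b \<and> q = a)" by (simp add: doubleton_eq_iff)
  then show "a = p \<and> b = q" using \<open>a < b\<close> \<open>p < q\<close> by (elim disjE) auto
qed

definition btw :: "nat \<Rightarrow> nat \<Rightarrow> nat \<Rightarrow> bool" where
  "btw p q x \<longleftrightarrow> (p < x \<and> x < q) \<or> (q < x \<and> x < p)"

definition crossc :: "nat \<Rightarrow> nat \<Rightarrow> nat \<Rightarrow> nat \<Rightarrow> bool" where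
 "crossc p q r s \<longleftrightarrow> (p\<noteq>r \<and> p\<noteq>s \<and> q\<noteq>r \<and> q\<noteq>s \<and> (btw p q r \<noteq> btw p q s))"

lemma crosses_ord:
  assumes "p < q" "r < s"
  shows "crosses {p,q} {r,s} \<longleftrightarrow> crossc p q r s"
proof
  assume "crosses {p,q} {r,s}"
  then obtain a b c d where h: "a < b" "c < d" "{p,q} = {a,b}" "{r,s} = {c,d}" "a \<noteq> c" "a \<noteq> d" "b \<noteq> c" "b \<noteq> d"
    "((a < c \<and> c < b) \<noteq> (a < d \<and> d < b))" unfolding crosses_def by metis
  have "a = p" "b = q" using ord2[OF h(1) assms(1) h(3)] by auto
  moreover have "c = r" "d = s" using ord2[OF h(2) assms(2) h(4)] by auto
  ultimately show "crossc p q r s" using h assms unfolding crossc_def btw_def by auto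
next
  assume H: "crossc p q r s"
  have b: "btw p q r = (p<r\<and>r<q)" "btw p q s = (p<s\<and>s<q)" using assms by (auto simp: btw_def)
  have W: "p<q \<and> r<s \<and> {p,q}={p,q} \<and> {r,s}={r,s} \<and> p \<noteq> r \<and> p \<noteq> s \<and> q \<noteq> r \<and> q \<noteq> s \<and> ((p < r \<and> r < q) \<noteq> (p < s \<and> s < q))"
    using H assms unfolding crossc_def b[symmetric] by simp
  show "crosses {p,q} {r,s}" unfolding crosses_def using W by blast
qed


lemma crossc_swap1: "crossc p q r s = crossc q p r s" unfolding crossc_def btw_def by auto
lemma crossc_swap2: "crossc p q r s = crossc p q s r" unfolding crossc_def by auto

lemma crosses_iff:
  assumes "p \<noteq> q" "r \<noteq> s"
  shows "crosses {p,q} {r,s} \<longleftrightarrow> crossc p q r s"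
proof -
  have A: "{p,q} = {min p q, max p q}" "{r,s} = {min r s, max r s}" by (auto simp: min_def max_def)
  have "crosses {min p q, max p q} {min r s, max r s} \<longleftrightarrow> crossc (min p q) (max p q) (min r s) (max r s)"
    using assms by (intro crosses_ord) (auto simp: min_def max_def)
  moreover have "crossc (min p q) (max p q) (min r s) (max r s) = crossc p q r s"
    by (cases "p < q"; cases "r < s") (auto simp: min_def max_def crossc_swap1 crossc_swap2 )
  ultimately show ?thesis using A by simp
qed



lemma crossc_shift: "crossc (p+1) (q+1) (r+1) (s+1) = crossc p q r s"
  unfolding crossc_def btw_def by auto

lemma crossc_wrap1: assumes "p < N" "r < N" "s < N" 
  shows "crossc (p+1) 0 (r+1) (s+1) = crossc p N r s"
  using assms unfolding crossc_def btw_def by auto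

lemma crossc_wrap2: assumes "p < N" "q < N" "r < N" 
  shows "crossc (p+1) (q+1) (r+1) 0 = crossc p q r N"
  using assms unfolding crossc_def btw_def by auto


definition r1 :: "nat \<Rightarrow> nat \<Rightarrow> nat" where "r1 N x = (if x = N then 0 else x + 1)"

lemma crossc_r1:
  assumes "p \<le> N" "q \<le> N" "r \<le> N" "s \<le> N"
  shows "crossc (r1 N p) (r1 N q) (r1 N r) (r1 N s) = crossc p q r s"
proof -
  consider "p \<noteq> N" "q \<noteq> N" "r \<noteq> N" "s \<noteq> N" | "p = N" "q \<noteq> N" "r \<noteq> N" "s \<noteq> N" 
   | "q = N" "p \<noteq> N" "r \<noteq> N" "s \<noteq> N" | "r = N" "p \<noteq> N" "q \<noteq> N" "s \<noteq> N"
   | "s = N" "p \<noteq> N" "q \<noteq> N" "r \<noteq> N" | "p = N \<and> q = N \<or> p = N \<and> r = N \<or> p = N \<and> s = N \<or> q = N \<and> r = N \<or> q = N \<and> s = N \<or> r = N \<and> s = N"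
    by (cases "p=N"; cases "q=N"; cases "r=N"; cases "s=N"; simp)
  then show ?thesis
  proof cases
    case 1 then show ?thesis using crossc_shift[of p q r s] by (simp add: r1_def)
  next
    case 2
    then have "q < N" "r < N" "s < N" using assms by auto
    then have "crossc (q+1) 0 (r+1) (s+1) = crossc q N r s" by (rule crossc_wrap1)
    then show ?thesis using 2 crossc_swap1[of 0 "q+1" "r+1" "s+1"] crossc_swap1[of N q r s] by (simp add: r1_def)
  next
    case 3
    then have "p < N" "r < N" "s < N" using assms by auto
    then have "crossc (p+1) 0 (r+1) (s+1) = crossc p N r s" by (rule crossc_wrap1)
    then show ?thesis using 3 by (simp add: r1_def)
  next
    case 4
    then have "p < N" "q < N" "s < N" using assms by auto
    then have "crossc (p+1) (q+1) (s+1) 0 = crossc p q s N" by (rule crossc_wrap2)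
    then show ?thesis using 4 crossc_swap2[of "p+1" "q+1" 0 "s+1"] crossc_swap2[of p q N s] by (simp add: r1_def)
  next
    case 5
    then have "p < N" "q < N" "r < N" using assms by auto
    then have "crossc (p+1) (q+1) (r+1) 0 = crossc p q r N" by (rule crossc_wrap2)
    then show ?thesis using 5 by (simp add: r1_def)
  next
    case 6 then show ?thesis by (elim disjE) (simp_all add: crossc_def btw_def r1_def)
  qed
qed

definition rot :: "nat \<Rightarrow> nat \<Rightarrow> nat \<Rightarrow> nat" where "rot m k x = (x + k) mod (2*m)"

lemma rot_Suc: "m > 0 \<Longrightarrow> rot m (Suc k) x = r1 (2*m - 1) (rot m k x)"
  unfolding rot_def r1_def
  by (simp add: mod_Suc, linarith)

lemma rot_less: "m > 0 \<Longrightarrow> rot m k x < 2*m" unfolding rot_def by simp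

lemma crossc_rot:
  assumes "m > 0" "p < 2*m" "q < 2*m" "r < 2*m" "s < 2*m"
  shows "crossc (rot m k p) (rot m k q) (rot m k r) (rot m k s) = crossc p q r s"
proof (induction k)
  case 0
  then show ?case using assms by (simp add: rot_def)
next
  case (Suc k)
  have "rot m k x \<le> 2*m - 1" for x using rot_less[OF assms(1), of k x] by linarith
  then show ?case using Suc crossc_r1[of "rot m k p" "2*m-1" "rot m k q" "rot m k r" "rot m k s"]
    by (simp add: rot_Suc[OF assms(1)])
qed



lemma rot_inj:
  assumes "x < 2*m" "y < 2*m" "rot m k x = rot m k y"
  shows "x = y"
proof -
  have "(k + x) mod (2*m) = (k + y) mod (2*m)" using assms(3) unfolding rot_def by (simp add: add.commute)
  then have "x mod (2*m) = y mod (2*m)" by (rule mod_cancel_nat)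
  then show ?thesis using assms by simp
qed

lemma rot_inj_on: "inj_on (rot m k) {..<2*m}"
proof (rule inj_onI)
  fix x y assume "x \<in> {..<2*m}" "y \<in> {..<2*m}" "rot m k x = rot m k y"
  then show "x = y" using rot_inj[of x m y k] by simp
qed

lemma is_edge_iff: "is_edge m e \<longleftrightarrow> (\<exists>a b. a \<noteq> b \<and> a < 2*m \<and> b < 2*m \<and> e = {a,b})"
proof
  assume "is_edge m e" then show "\<exists>a b. a \<noteq> b \<and> a < 2*m \<and> b < 2*m \<and> e = {a,b}"
  proof -
    from \<open>is_edge m e\<close> obtain a b where "a < b" "b < 2*m" "e = {a,b}" unfolding is_edge_def by blast
    moreover have "a \<noteq> b" "a < 2*m" using calculation by auto
    ultimately show ?thesis by blast
  qed
next
  assume "\<exists>a b. a \<noteq> b \<and> a < 2*m \<and> b < 2*m \<and> e = {a,b}"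
  then obtain a b where h: "a \<noteq> b" "a < 2*m" "b < 2*m" "e = {a,b}" by blast
  show "is_edge m e" unfolding is_edge_def
  proof (cases "a < b")
    case True then show "\<exists>a' b'. a' < b' \<and> b' < 2 * m \<and> e = {a', b'}" using h by blast
  next
    case False then have "b < a" using h by simp
    then show "\<exists>a' b'. a' < b' \<and> b' < 2 * m \<and> e = {a', b'}" using h by (intro exI[of _ b] exI[of _ a]) auto
  qed
qed

lemma edge_sub: "is_edge m e \<Longrightarrow> e \<subseteq> {..<2*m}"
  unfolding is_edge_def by auto

lemma disjoint_edges_iff:
  assumes "a \<noteq> b" "c \<noteq> d"
  shows "disjoint_edges {a,b} {c,d} \<longleftrightarrow> (a \<noteq> c \<and> a \<noteq> d \<and> b \<noteq> c \<and> b \<noteq> d \<and> \<not> crossc a b c d)"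
  unfolding disjoint_edges_def crosses_iff[OF assms] by blast

lemma rot_edge:
  assumes "m > 0" "is_edge m e"
  shows "is_edge m (rot m k ` e)"
proof -
  obtain a b where h: "a \<noteq> b" "a < 2*m" "b < 2*m" "e = {a,b}" using assms(2) is_edge_iff by blast
  have "rot m k a \<noteq> rot m k b" using rot_inj h by blast
  moreover have "rot m k ` e = {rot m k a, rot m k b}" using h by simp
  ultimately show ?thesis unfolding is_edge_iff using rot_less[OF assms(1)] by blast
qed


lemma SPM_rot:
  assumes "m > 0" "is_SPM m M"
  shows "is_SPM m ((\<lambda>e. rot m k ` e) ` M)"
proof -
  have sub: "M \<subseteq> all_edges m" and cM: "card M = m" and dis: "\<forall>e\<in>M. \<forall>f\<in>M. e \<noteq> f \<longrightarrow> disjoint_edges e f"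
    using assms(2) unfolding is_SPM_def by auto
  have "M \<subseteq> Pow {..<2*m}" using sub edge_sub unfolding all_edges_def by auto
  then have inj: "inj_on (\<lambda>e. rot m k ` e) M"
    by (rule inj_on_subset[OF inj_on_image_Pow[OF rot_inj_on]])
  have A: "(\<lambda>e. rot m k ` e) ` M \<subseteq> all_edges m" using sub rot_edge[OF assms(1)] unfolding all_edges_def by auto
  have B: "card ((\<lambda>e. rot m k ` e) ` M) = m" using card_image[OF inj] cM by simp
  have C: "disjoint_edges (rot m k ` e) (rot m k ` f)" if "e \<in> M" "f \<in> M" "rot m k ` e \<noteq> rot m k ` f" for e f
  proof -
    have "e \<noteq> f" using that by auto
    then have d: "disjoint_edges e f" using dis that by auto
    have "is_edge m e" "is_edge m f" using sub that unfolding all_edges_def by auto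
    then obtain a b c d where h: "a \<noteq> b" "a < 2*m" "b < 2*m" "e = {a,b}" and h2: "c \<noteq> d" "c < 2*m" "d < 2*m" "f = {c,d}"
      unfolding is_edge_iff by blast
    have ne: "rot m k a \<noteq> rot m k b" "rot m k c \<noteq> rot m k d" using rot_inj h h2 by blast+
    have x: "a \<noteq> c \<and> a \<noteq> d \<and> b \<noteq> c \<and> b \<noteq> d \<and> \<not> crossc a b c d"
      using d disjoint_edges_iff[OF h(1) h2(1)] h h2 by simp
    have "rot m k a \<noteq> rot m k c \<and> rot m k a \<noteq> rot m k d \<and> rot m k b \<noteq> rot m k c \<and> rot m k b \<noteq> rot m k d"
      using x rot_inj[OF h(2) h2(2)] rot_inj[OF h(2) h2(3)] rot_inj[OF h(3) h2(2)] rot_inj[OF h(3) h2(3)] by auto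
    moreover have "\<not> crossc (rot m k a) (rot m k b) (rot m k c) (rot m k d)"
      using x crossc_rot[OF assms(1) h(2) h(3) h2(2) h2(3)] by simp
    ultimately show ?thesis using disjoint_edges_iff[OF ne] h h2 by simp
  qed
  have D: "\<forall>e'\<in>(\<lambda>e. rot m k ` e) ` M. \<forall>f'\<in>(\<lambda>e. rot m k ` e) ` M. e' \<noteq> f' \<longrightarrow> disjoint_edges e' f'"
  proof (intro ballI impI)
    fix e' f' assume "e' \<in> (\<lambda>e. rot m k ` e) ` M" "f' \<in> (\<lambda>e. rot m k ` e) ` M" "e' \<noteq> f'"
    then obtain e f where "e \<in> M" "f \<in> M" "e' = rot m k ` e" "f' = rot m k ` f" by auto
    then show "disjoint_edges e' f'" using C \<open>e' \<noteq> f'\<close> by simp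
  qed
  show ?thesis unfolding is_SPM_def using A B D by simp
qed



definition blk :: "nat \<Rightarrow> nat \<Rightarrow> nat set set" where
  "blk s L = (\<lambda>j. {s+j, s+2*L-1-j}) ` {..<L}"

definition M3 :: "nat \<Rightarrow> nat \<Rightarrow> nat \<Rightarrow> nat set set" where
  "M3 L1 L2 L3 = blk 0 L1 \<union> blk (2*L1) L2 \<union> blk (2*L1+2*L2) L3"

lemma nested_ok:
  assumes "(a::nat) < b" "c < d" "a + b = c + d" "{a,b} \<noteq> {c,d}"
  shows "a\<noteq>c \<and> a\<noteq>d \<and> b\<noteq>c \<and> b\<noteq>d \<and> \<not> crossc a b c d"
proof -
  have "a \<noteq> c" using assms by auto
  moreover have "a \<noteq> d" using assms by auto
  moreover have "b \<noteq> c" using assms by auto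
  moreover have "b \<noteq> d" using assms by auto
  moreover have "\<not> crossc a b c d" using assms unfolding crossc_def btw_def by auto
  ultimately show ?thesis by blast
qed

lemma sep_ok:
  assumes "(a::nat) < b" "c < d" "b < c \<or> d < a"
  shows "a\<noteq>c \<and> a\<noteq>d \<and> b\<noteq>c \<and> b\<noteq>d \<and> \<not> crossc a b c d"
  using assms unfolding crossc_def btw_def by auto

lemma blk_mem: "e \<in> blk s L \<longleftrightarrow> (\<exists>j<L. e = {s+j, s+2*L-1-j})"
  unfolding blk_def by auto

lemma blk_pair:
  assumes "e \<in> blk s L" "f \<in> blk s' L'" "e \<noteq> f" "(s = s' \<and> L = L') \<or> s + 2*L \<le> s' \<or> s' + 2*L' \<le> s"
  shows "disjoint_edges e f"
proof -
  obtain j where j: "j < L" "e = {s+j, s+2*L-1-j}" using assms(1) blk_mem by blast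
  obtain j' where j': "j' < L'" "f = {s'+j', s'+2*L'-1-j'}" using assms(2) blk_mem by blast
  have o1: "s+j < s+2*L-1-j" using j by linarith
  have o2: "s'+j' < s'+2*L'-1-j'" using j' by linarith
  have "s+j\<noteq>s'+j' \<and> s+j\<noteq>s'+2*L'-1-j' \<and> s+2*L-1-j\<noteq>s'+j' \<and> s+2*L-1-j\<noteq>s'+2*L'-1-j' \<and>
       \<not> crossc (s+j) (s+2*L-1-j) (s'+j') (s'+2*L'-1-j')"
  proof (cases "s = s' \<and> L = L'")
    case True
    have "(s+j) + (s+2*L-1-j) = (s'+j') + (s'+2*L'-1-j')" using True j j' by linarith
    then show ?thesis using nested_ok[OF o1 o2] assms(3) j j' by simp
  next
    case False
    then have "s + 2*L \<le> s' \<or> s' + 2*L' \<le> s" using assms(4) by blast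
    then have "s+2*L-1-j < s'+j' \<or> s'+2*L'-1-j' < s+j" using j j' by linarith
    then show ?thesis using sep_ok[OF o1 o2] by blast
  qed
  then show ?thesis using disjoint_edges_iff[of "s+j" "s+2*L-1-j" "s'+j'" "s'+2*L'-1-j'"] o1 o2 j j' by simp
qed

lemma blk_card: "card (blk s L) = L"
proof -
  have "inj_on (\<lambda>j. {s+j, s+2*L-1-j}) {..<L}"
  proof (rule inj_onI)
    fix x y assume h: "x \<in> {..<L}" "y \<in> {..<L}" "{s+x, s+2*L-1-x} = {s+y, s+2*L-1-y}"
    have "s+x < s+2*L-1-x" "s+y < s+2*L-1-y" using h by auto
    then have "s+y = s+x" using ord2 h(3) by blast
    then show "x = y" by simp
  qed
  then show ?thesis unfolding blk_def by (simp add: card_image)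
qed

lemma blk_sub: "e \<in> blk s L \<Longrightarrow> e \<subseteq> {s..<s+2*L}"
  unfolding blk_mem by auto

lemma blk_ne: "e \<in> blk s L \<Longrightarrow> e \<noteq> {}"
  unfolding blk_mem by auto

lemma blk_disj: "s + 2*L \<le> s' \<Longrightarrow> blk s L \<inter> blk s' L' = {}"
proof (rule ccontr)
  assume "s + 2*L \<le> s'" "blk s L \<inter> blk s' L' \<noteq> {}"
  then obtain e where "e \<in> blk s L" "e \<in> blk s' L'" by blast
  then have "e \<subseteq> {s..<s+2*L}" "e \<subseteq> {s'..<s'+2*L'}" "e \<noteq> {}" using blk_sub blk_ne by auto
  then obtain x where "x \<in> {s..<s+2*L}" "x \<in> {s'..<s'+2*L'}" by blast
  then show False using \<open>s + 2*L \<le> s'\<close> by simp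
qed

lemma blk_edges: "s + 2*L \<le> 2*m \<Longrightarrow> blk s L \<subseteq> all_edges m"
proof
  fix e assume "s + 2*L \<le> 2*m" "e \<in> blk s L"
  then obtain j where j: "j < L" "e = {s+j, s+2*L-1-j}" using blk_mem by blast
  have "s+j < s+2*L-1-j" "s+2*L-1-j < 2*m" using j \<open>s + 2*L \<le> 2*m\<close> by linarith+
  then show "e \<in> all_edges m" unfolding all_edges_def is_edge_def using j by blast
qed

lemma SPM_M3:
  assumes "L1 + L2 + L3 = m"
  shows "is_SPM m (M3 L1 L2 L3)"
proof -
  have "blk 0 L1 \<subseteq> all_edges m" "blk (2*L1) L2 \<subseteq> all_edges m" "blk (2*L1+2*L2) L3 \<subseteq> all_edges m"
    by (rule blk_edges, use assms in simp)+
  then have A: "M3 L1 L2 L3 \<subseteq> all_edges m" unfolding M3_def by blast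
  have d1: "blk 0 L1 \<inter> blk (2*L1) L2 = {}" by (rule blk_disj) simp
  have d2: "(blk 0 L1 \<union> blk (2*L1) L2) \<inter> blk (2*L1+2*L2) L3 = {}"
    using blk_disj[of 0 L1 "2*L1+2*L2" L3] blk_disj[of "2*L1" L2 "2*L1+2*L2" L3] by auto
  have B: "card (M3 L1 L2 L3) = m"
  proof -
    have f: "finite (blk s L)" for s L unfolding blk_def by simp
    have "card (blk 0 L1 \<union> blk (2*L1) L2 \<union> blk (2*L1+2*L2) L3)
       = card (blk 0 L1 \<union> blk (2*L1) L2) + card (blk (2*L1+2*L2) L3)"
      using card_Un_disjoint[OF _ _ d2] f by simp
    also have "\<dots> = card (blk 0 L1) + card (blk (2*L1) L2) + card (blk (2*L1+2*L2) L3)"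
      using card_Un_disjoint[OF _ _ d1] f by simp
    finally show ?thesis using blk_card assms by (simp add: M3_def)
  qed
  have C: "disjoint_edges e f" if "e \<in> M3 L1 L2 L3" "f \<in> M3 L1 L2 L3" "e \<noteq> f" for e f
    using that unfolding M3_def
    apply (elim UnE)
    by (rule blk_pair, assumption, assumption, assumption, simp)+
  show ?thesis unfolding is_SPM_def using A B C by blast
qed



definition cls :: "nat \<Rightarrow> nat set \<Rightarrow> nat" where "cls m e = (\<Sum>e) mod (2*m)"

definition RM :: "nat \<Rightarrow> nat \<Rightarrow> nat \<Rightarrow> nat \<Rightarrow> nat \<Rightarrow> nat set set" where
  "RM m k L1 L2 L3 = (\<lambda>e. rot m k ` e) ` M3 L1 L2 L3"

lemma SPM_RM: "m > 0 \<Longrightarrow> L1 + L2 + L3 = m \<Longrightarrow> is_SPM m (RM m k L1 L2 L3)"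
  unfolding RM_def by (rule SPM_rot) (auto intro: SPM_M3)

lemma cls_rot:
  assumes "m > 0" "x \<noteq> y" "x < 2*m" "y < 2*m"
  shows "cls m (rot m k ` {x,y}) = (x + y + 2*k) mod (2*m)"
proof -
  have ne: "rot m k x \<noteq> rot m k y" using rot_inj assms by blast
  have "cls m (rot m k ` {x,y}) = (rot m k x + rot m k y) mod (2*m)" unfolding cls_def using ne by simp
  also have "\<dots> = ((x + k) + (y + k)) mod (2*m)" unfolding rot_def by (simp add: mod_add_eq)
  also have "(x + k) + (y + k) = x + y + 2*k" by simp
  finally show ?thesis .
qed

lemma mod_Suc_ne: "(n::nat) > 1 \<Longrightarrow> Suc i mod n \<noteq> i mod n"
  by (simp add: mod_Suc)

lemma cls_bedge:
  assumes "m > 0"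
  shows "cls m (bedge m i) = (2*i+1) mod (2*m)"
proof -
  have "(i+1) mod (2*m) \<noteq> i mod (2*m)" using mod_Suc_ne[of "2*m" i] assms by simp
  then have "cls m (bedge m i) = (i mod (2*m) + (i+1) mod (2*m)) mod (2*m)" unfolding cls_def bedge_def by simp
  also have "\<dots> = (2*i+1) mod (2*m)" by (simp add: mod_add_eq mult_2)
  finally show ?thesis .
qed

lemma cls_RM:
  assumes "m > 0" "e \<in> (\<lambda>e. rot m k ` e) ` blk s L" "s + 2*L \<le> 2*m"
  shows "cls m e = (2*s + 2*L - 1 + 2*k) mod (2*m)"
proof -
  obtain f where f: "f \<in> blk s L" "e = rot m k ` f" using assms(2) by blast
  then obtain j where j: "j < L" "f = {s+j, s+2*L-1-j}" using blk_mem by blast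
  have "cls m e = ((s+j) + (s+2*L-1-j) + 2*k) mod (2*m)"
    using cls_rot[OF assms(1), of "s+j" "s+2*L-1-j" k] f j assms(3) by simp
  also have "(s+j) + (s+2*L-1-j) = 2*s + 2*L - 1" using j by simp
  finally show ?thesis .
qed

lemma blocker_unique:
  assumes "m > 0" "is_blocker m B" "e \<in> B" "f \<in> B" "cls m e = cls m f"
  shows "e = f"
proof -
  have PC: "is_SPM m (RM m (t+1) m 0 0)" for t using SPM_RM[OF assms(1)] by simp
  have clsPC: "cls m e = 2*t+1" if "t < m" "e \<in> RM m (t+1) m 0 0" for t e
  proof -
    have "e \<in> (\<lambda>e. rot m (t+1) ` e) ` blk 0 m" using that unfolding RM_def M3_def by (simp add: blk_def)
    then have "cls m e = (2*0 + 2*m - 1 + 2*(t+1)) mod (2*m)" using cls_RM[OF assms(1)] by simp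
    also have "2*0 + 2*m - 1 + 2*(t+1) = (2*t+1) + 2*m" using assms(1) by simp
    also have "((2*t+1) + 2*m) mod (2*m) = 2*t+1" using that by (simp only: mod_add_self2) simp
    finally show ?thesis .
  qed
  have "\<forall>t. \<exists>g. t < m \<longrightarrow> g \<in> B \<inter> RM m (t+1) m 0 0"
    using assms(2) PC unfolding is_blocker_def is_blocking_set_def by blast
  then obtain g where g: "\<And>t. t < m \<Longrightarrow> g t \<in> B \<inter> RM m (t+1) m 0 0" by metis
  have cg: "cls m (g t) = 2*t+1" if "t < m" for t using g[OF that] clsPC[OF that] by blast
  have inj: "inj_on g {..<m}"
  proof (rule inj_onI)
    fix x y assume "x \<in> {..<m}" "y \<in> {..<m}" "g x = g y"
    then have "2*x+1 = 2*y+1" using cg by (metis lessThan_iff)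
    then show "x = y" by simp
  qed
  have sub: "g ` {..<m} \<subseteq> B" using g by blast
  have cB: "card B = m" using assms(2) unfolding is_blocker_def by simp
  then have fin: "finite B" using assms(1) card_ge_0_finite by auto
  have "card (g ` {..<m}) = card B" using card_image[OF inj] cB by simp
  then have eq: "g ` {..<m} = B" using card_subset_eq[OF fin sub] by simp
  obtain t1 where t1: "t1 < m" "e = g t1" using eq assms(3) by blast
  obtain t2 where t2: "t2 < m" "f = g t2" using eq assms(4) by blast
  have "2*t1+1 = 2*t2+1" using cg t1 t2 assms(5) by metis
  then show ?thesis using t1 t2 by simp
qed

lemma bedge_mod: "x mod (2*m) = y mod (2*m) \<Longrightarrow> bedge m x = bedge m y"
  unfolding bedge_def by (metis mod_Suc_eq Suc_eq_plus1)

lemma bedge_antipode: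
  assumes "m \<ge> 2"
  shows "bedge m (x + m) \<noteq> bedge m x"
proof
  assume h: "bedge m (x + m) = bedge m x"
  have "x mod (2*m) \<in> bedge m (x+m)" using h unfolding bedge_def by simp
  then have "(x + 0) mod (2*m) = (x + m) mod (2*m) \<or> (x + 0) mod (2*m) = (x + (m+1)) mod (2*m)"
    unfolding bedge_def by (simp add: add.assoc)
  then have "0 mod (2*m) = m mod (2*m) \<or> 0 mod (2*m) = (m+1) mod (2*m)" using mod_cancel_nat by blast
  then show False using assms by simp
qed



definition eqm :: "nat \<Rightarrow> nat \<Rightarrow> nat \<Rightarrow> bool" where
  "eqm n p q \<longleftrightarrow> p = q \<or> p = q+n \<or> p = q+2*n \<or> q = p+n \<or> q = p+2*n"

lemma chord_not_bedge:
  assumes "m \<ge> 2" "f \<in> blk s L" "s + 2*L \<le> 2*m" "rot m (a + D) ` f = bedge m (a + t)" "t < 2*m" "D < 2*m"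
  shows "\<exists>x. s \<le> x \<and> x < s + L \<and> (eqm (2*m) (x+D) t \<or> eqm (2*m) (x+D) (t+1))"
proof -
  obtain j where j: "j < L" "f = {s+j, s+2*L-1-j}" using assms(2) blk_mem by blast
  let ?x = "s+j"
  have "rot m (a+D) ?x \<in> bedge m (a+t)" using assms(4) j by blast
  then have "(a + (?x+D)) mod (2*m) = (a + t) mod (2*m) \<or> (a + (?x+D)) mod (2*m) = (a + (t+1)) mod (2*m)"
    unfolding rot_def bedge_def by (auto simp: algebra_simps)
  then have "(?x+D) mod (2*m) = t mod (2*m) \<or> (?x+D) mod (2*m) = (t+1) mod (2*m)"
    using mod_cancel_nat by blast
  moreover have "?x + D < 3*(2*m)" "t < 3*(2*m)" "t + 1 < 3*(2*m)" using assms j by linarith+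
  ultimately have "eqm (2*m) (?x+D) t \<or> eqm (2*m) (?x+D) (t+1)"
    unfolding eqm_def using mod_cases3 by blast
  moreover have "s \<le> ?x" "?x < s + L" using j by auto
  ultimately show ?thesis by blast
qed

lemma mod_shift_back:
  assumes "(n::nat) > 0"
  shows "(a + (i + (n - a mod n)) mod n) mod n = i mod n"
proof -
  have "(a + (i + (n - a mod n)) mod n) mod n = (a + (i + (n - a mod n))) mod n" by (simp add: mod_add_right_eq)
  also have "\<dots> = (a mod n + (i + (n - a mod n))) mod n" by (simp add: mod_add_left_eq)
  also have "a mod n + (i + (n - a mod n)) = i + n" using mod_less_divisor[OF assms, of a] by linarith
  finally show ?thesis by simp
qed

lemma window_fact:
  assumes "m \<ge> 2" "\<not> (\<exists>s < 2*m. B \<inter> boundary_edges m \<subseteq> {bedge m (s + k) | k. k < m})"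
  shows "\<exists>t<2*m. bedge m (a+t) \<in> B \<and> (\<forall>k<m. (\<sigma>+k) mod (2*m) \<noteq> t)"
proof -
  let ?s = "(a+\<sigma>) mod (2*m)"
  have "?s < 2*m" using assms(1) by simp
  then obtain e where e: "e \<in> B" "e \<in> boundary_edges m" "e \<notin> {bedge m (?s + k) | k. k < m}" using assms(2) by blast
  then obtain i where i: "i < 2*m" "e = bedge m i" unfolding boundary_edges_def by blast
  define t where "t = (i + (2*m - a mod (2*m))) mod (2*m)"
  have tl: "t < 2*m" unfolding t_def using assms(1) by simp
  have "(a + t) mod (2*m) = i mod (2*m)" unfolding t_def using mod_shift_back assms(1) by simp
  then have bt: "bedge m (a+t) = e" using i bedge_mod by metis
  have "(\<sigma>+k) mod (2*m) \<noteq> t" if "k < m" for k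
  proof
    assume "(\<sigma>+k) mod (2*m) = t"
    then have "(a + t) mod (2*m) = (a + (\<sigma>+k)) mod (2*m)" by (metis mod_add_right_eq)
    also have "\<dots> = (?s + k) mod (2*m)" by (simp add: mod_add_left_eq add.assoc)
    finally have "bedge m (a+t) = bedge m (?s + k)" using bedge_mod by blast
    then show False using e(3) bt that by blast
  qed
  then show ?thesis using tl bt e(1) by blast
qed



lemma gap:
  fixes P :: "nat \<Rightarrow> bool" and m :: nat
  assumes "m \<ge> 2" "P 0" "\<And>t. P t \<Longrightarrow> t < 2*m" "\<And>t. P t \<Longrightarrow> \<not> P ((t+m) mod (2*m))"
    "\<And>\<sigma>. \<sigma> < 2*m \<Longrightarrow> \<exists>t. P t \<and> (\<forall>k<m. (\<sigma>+k) mod (2*m) \<noteq> t)"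
  shows "\<exists>b c. 0<b \<and> b<m \<and> m<c \<and> c<2*m \<and> c - b < m \<and> P b \<and> P c"
proof -
  have Pm: "\<not> P m" using assms(4)[OF assms(2)] assms(1) by simp
  obtain t0 where t0: "P t0" "\<forall>k<m. (0+k) mod (2*m) \<noteq> t0" using assms(5)[of 0] assms(1) by auto
  have "t0 \<ge> m"
  proof (rule ccontr)
    assume "\<not> m \<le> t0"
    then have "t0 < m" by simp
    then have "(0+t0) mod (2*m) \<noteq> t0" using t0(2) by blast
    then show False using \<open>t0 < m\<close> by simp
  qed
  then have t0m: "m < t0" using Pm t0(1) le_neq_implies_less by blast
  define c where "c = (LEAST t. P t \<and> m < t)"
  have c: "P c" "m < c" using LeastI[of "\<lambda>t. P t \<and> m < t" t0] t0(1) t0m unfolding c_def by auto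
  have cmin: "\<And>t. P t \<Longrightarrow> m < t \<Longrightarrow> c \<le> t" unfolding c_def by (simp add: Least_le)
  have c2: "c < 2*m" using assms(3)[OF c(1)] .
  obtain x where x: "P x" "\<forall>k<m. (c+k) mod (2*m) \<noteq> x" using assms(5)[OF c2] by blast
  have x2: "x < 2*m" using assms(3)[OF x(1)] .
  have xc: "x < c"
  proof (rule ccontr)
    assume "\<not> x < c"
    then have "x - c < m" "(c + (x - c)) mod (2*m) = x" using x2 c by auto
    then show False using x(2) by blast
  qed
  have xcm: "c - m < x"
  proof (rule ccontr)
    assume A: "\<not> c - m < x"
    show False
    proof (cases "x = c - m")
      case True
      then have "(x + m) mod (2*m) = c" using c c2 by simp
      then show False using assms(4)[OF x(1)] c(1) by simp
    next
      case False
      then have B: "x < c - m" using A by simp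
      then have "x + 2*m - c < m" using c c2 by linarith
      moreover have "(c + (x + 2*m - c)) mod (2*m) = x"
      proof -
        have "c + (x + 2*m - c) = x + 2*m" using c2 by linarith
        then show ?thesis using x2 by simp
      qed
      ultimately show False using x(2) by blast
    qed
  qed
  have xm: "x < m"
  proof (rule ccontr)
    assume "\<not> x < m"
    then have "x = m \<or> m < x" by auto
    then show False using Pm x(1) cmin[OF x(1)] xc by auto
  qed
  have "0 < x" "c - x < m" using xcm c c2 xc by linarith+
  then show ?thesis using xm c c2 x(1) by blast
qed

lemma block_contra:
  assumes "m \<ge> 2" "is_blocker m B" "f \<in> blk s L" "s + 2*L \<le> 2*m" "rot m (a+D) ` f \<in> B"
    "bedge m (a+t) \<in> B" "t < 2*m" "D < 2*m" "2*s + 2*L - 1 + 2*(a+D) = (2*(a+t)+1) + 2*m"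
  shows "\<exists>x. s \<le> x \<and> x < s + L \<and> (eqm (2*m) (x+D) t \<or> eqm (2*m) (x+D) (t+1))"
proof -
  have m0: "m > 0" using assms(1) by simp
  have "cls m (rot m (a+D) ` f) = (2*s + 2*L - 1 + 2*(a+D)) mod (2*m)"
    using cls_RM[OF m0 _ assms(4)] assms(3) by blast
  also have "\<dots> = ((2*(a+t)+1) + 2*m) mod (2*m)" using assms(9) by (simp only:)
  also have "\<dots> = (2*(a+t)+1) mod (2*m)" by (rule mod_add_self2)
  also have "\<dots> = cls m (bedge m (a+t))" using cls_bedge[OF m0] by simp
  finally have "rot m (a+D) ` f = bedge m (a+t)" using blocker_unique[OF m0 assms(2) assms(5) assms(6)] by blast
  then show ?thesis using chord_not_bedge[OF assms(1) assms(3) assms(4) _ assms(7) assms(8)] by blast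
qed

theorem lemma3p3:
  fixes m :: nat and B :: "nat set set"
  assumes "m \<ge> 2" and "is_blocker m B"
  shows "\<exists>s < 2*m. B \<inter> boundary_edges m \<subseteq> {bedge m (s + k) | k. k < m}"
proof (rule ccontr)
  assume H: "\<not> ?thesis"
  have m0: "m > 0" using assms(1) by simp
  obtain a where a: "bedge m a \<in> B" using window_fact[OF assms(1) H, of 0 0] by auto
  define P where "P t \<longleftrightarrow> t < 2*m \<and> bedge m (a+t) \<in> B" for t
  have P0: "P 0" using a unfolding P_def using m0 by simp
  have P2: "\<And>t. P t \<Longrightarrow> t < 2*m" unfolding P_def by simp
  have antip: "\<not> P ((t+m) mod (2*m))" if "P t" for t
  proof
    assume "P ((t+m) mod (2*m))"
    then have b1: "bedge m (a + (t+m) mod (2*m)) \<in> B" unfolding P_def by simp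
    have "(a + (t+m) mod (2*m)) mod (2*m) = ((a+t)+m) mod (2*m)" by (simp add: mod_add_right_eq add.assoc)
    then have b2: "bedge m ((a+t)+m) \<in> B" using b1 bedge_mod by metis
    have b3: "bedge m (a+t) \<in> B" using that unfolding P_def by simp
    have "cls m (bedge m ((a+t)+m)) = (2*((a+t)+m)+1) mod (2*m)" using cls_bedge[OF m0] by simp
    also have "2*((a+t)+m)+1 = (2*(a+t)+1) + 2*m" by simp
    also have "((2*(a+t)+1) + 2*m) mod (2*m) = (2*(a+t)+1) mod (2*m)" by (rule mod_add_self2)
    also have "\<dots> = cls m (bedge m (a+t))" using cls_bedge[OF m0] by simp
    finally have "bedge m ((a+t)+m) = bedge m (a+t)" using blocker_unique[OF m0 assms(2) b2 b3] by blast
    then show False using bedge_antipode[OF assms(1)] by blast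
  qed
  have win: "\<exists>t. P t \<and> (\<forall>k<m. (\<sigma>+k) mod (2*m) \<noteq> t)" if "\<sigma> < 2*m" for \<sigma>
    using window_fact[OF assms(1) H, of a \<sigma>] unfolding P_def by blast
  obtain b c where bc: "0<b" "b<m" "m<c" "c<2*m" "c - b < m" "P b" "P c"
    using gap[OF assms(1) P0 P2 antip win] by blast
  define L1 where "L1 = m - (c - b)"
  define L2 where "L2 = c - m"
  define L3 where "L3 = m - b"
  define D where "D = 1 + c - b"
  have sumL: "L1 + L2 + L3 = m" unfolding L1_def L2_def L3_def using bc by linarith
  have D2: "D < 2*m" unfolding D_def using bc by linarith
  have SPM: "is_SPM m (RM m (a+D) L1 L2 L3)" using SPM_RM[OF m0 sumL] .
  then obtain e where e: "e \<in> RM m (a+D) L1 L2 L3" "e \<in> B"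
    using assms(2) unfolding is_blocker_def is_blocking_set_def by blast
  then obtain f where f: "rot m (a+D) ` f \<in> B" "f \<in> blk 0 L1 \<or> f \<in> blk (2*L1) L2 \<or> f \<in> blk (2*L1+2*L2) L3"
    unfolding RM_def M3_def by blast
  have B0: "bedge m (a+0) \<in> B" "bedge m (a+b) \<in> B" "bedge m (a+c) \<in> B" using P0 bc unfolding P_def by auto
  from f(2) show False
  proof (elim disjE)
    assume "f \<in> blk 0 L1"
    from block_contra[OF assms(1,2) this _ f(1) B0(1) _ D2]
    obtain x where "0 \<le> x" "x < 0 + L1" "eqm (2*m) (x+D) 0 \<or> eqm (2*m) (x+D) (0+1)"
      using bc m0 unfolding L1_def D_def by fastforce
    then show False using bc unfolding eqm_def L1_def D_def by auto
  next
    assume "f \<in> blk (2*L1) L2"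
    from block_contra[OF assms(1,2) this _ f(1) B0(2) _ D2]
    obtain x where "2*L1 \<le> x" "x < 2*L1 + L2" "eqm (2*m) (x+D) b \<or> eqm (2*m) (x+D) (b+1)"
      using bc m0 unfolding L1_def L2_def D_def by fastforce
    then show False using bc unfolding eqm_def L1_def L2_def D_def by auto
  next
    assume "f \<in> blk (2*L1+2*L2) L3"
    from block_contra[OF assms(1,2) this _ f(1) B0(3) _ D2]
    obtain x where "2*L1+2*L2 \<le> x" "x < 2*L1+2*L2 + L3" "eqm (2*m) (x+D) c \<or> eqm (2*m) (x+D) (c+1)"
      using bc m0 unfolding L1_def L2_def L3_def D_def by fastforce
    then show False using bc unfolding eqm_def L1_def L2_def L3_def D_def by auto
  qed
qed


end
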